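(* Let $X$ be a compact metric space and $f\colon X\to X$ an $n$-expansive homeomorphism with the shadowing property. Then $CR(f)=\overline{Per(f)}$.
   Context: $f$ is $n$-expansive if there is $c>0$ such that for every $x\in X$ the set $\{y: d(f^k(y),f^k(x))\leq c \ \forall k\in\mathbb{Z}\}$ has at most $n$ points. $f$ has the shadowing property if for every $\varepsilon>0$ there is $\delta>0$ such that for every $(x_k)_{k\in\mathbb{Z}}$ with $d(f(x_k),x_{k+1})<\delta$ for all $k$ there is $y$ with $d(f^k(y),x_k)<\varepsilon$ for all $k$. $Per(f)$ is the set of periodic points. A finite $\varepsilon$-pseudo orbit is $(x_k)_{k=0}^l$ with $d(f(x_k),x_{k+1})<\varepsilon$; $x$ is chain recurrent if for each $\varepsilon>0$ there is a nontrivial finite $\varepsilon$-pseudo orbit starting and ending at $x$; $CR(f)$ is the set of chain recurrent points. *)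

theory Defs
  imports "HOL-Analysis.Analysis"
begin

definition ziter :: "'a set \<Rightarrow> ('a \<Rightarrow> 'a) \<Rightarrow> int \<Rightarrow> 'a \<Rightarrow> 'a" where
  "ziter X f k = (if k \<ge> 0 then f ^^ nat k else (inv_into X f) ^^ nat (- k))"

definition n_expansive :: "'a::metric_space set \<Rightarrow> ('a \<Rightarrow> 'a) \<Rightarrow> nat \<Rightarrow> bool" where
  "n_expansive X f n \<longleftrightarrow> (\<exists>c>0. \<forall>x\<in>X.
     finite {y\<in>X. \<forall>k::int. dist (ziter X f k y) (ziter X f k x) \<le> c} \<and>
     card {y\<in>X. \<forall>k::int. dist (ziter X f k y) (ziter X f k x) \<le> c} \<le> n)"

definition shadowing :: "'a::metric_space set \<Rightarrow> ('a \<Rightarrow> 'a) \<Rightarrow> bool" where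
  "shadowing X f \<longleftrightarrow> (\<forall>e>0. \<exists>d>0. \<forall>xs::int \<Rightarrow> 'a.
     (\<forall>k. xs k \<in> X) \<and> (\<forall>k. dist (f (xs k)) (xs (k + 1)) < d) \<longrightarrow>
     (\<exists>y\<in>X. \<forall>k. dist (ziter X f k y) (xs k) < e))"

definition Per :: "'a set \<Rightarrow> ('a \<Rightarrow> 'a) \<Rightarrow> 'a set" where
  "Per X f = {x\<in>X. \<exists>p>0. (f ^^ p) x = x}"

definition CR :: "'a::metric_space set \<Rightarrow> ('a \<Rightarrow> 'a) \<Rightarrow> 'a set" where
  "CR X f = {x\<in>X. \<forall>e>0. \<exists>l>0. \<exists>xs::nat \<Rightarrow> 'a.
     (\<forall>i\<le>l. xs i \<in> X) \<and> xs 0 = x \<and> xs l = x \<and>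
     (\<forall>i<l. dist (f (xs i)) (xs (i + 1)) < e)}"

end

theory Submission
  imports Defs
begin

lemma funpow_in: "f ` X \<subseteq> X \<Longrightarrow> y \<in> X \<Longrightarrow> (f ^^ m) y \<in> X"
  by (induction m) auto

lemma funpow_inj:
  assumes "inj_on f X" "f ` X \<subseteq> X"
  shows "a \<in> X \<Longrightarrow> b \<in> X \<Longrightarrow> (f ^^ m) a = (f ^^ m) b \<Longrightarrow> a = b"
proof (induction m arbitrary: a b)
  case 0 then show ?case by simp
next
  case (Suc m)
  have "(f ^^ m) (f a) = (f ^^ m) (f b)" using Suc.prems(3) by (simp only: funpow_Suc_right o_apply)
  then have "f a = f b" using Suc.IH Suc.prems assms(2) by blast
  then show ?case using assms(1) Suc.prems by (meson inj_onD)
qed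

lemma ziter_f:
  assumes "inj_on f X" "y \<in> X"
  shows "ziter X f k (f y) = ziter X f (k + 1) y"
proof (cases "k \<ge> 0")
  case True
  then have "nat (k+1) = Suc (nat k)" by simp
  then show ?thesis using True by (simp add: ziter_def funpow_swap1)
next
  case False
  note F = False
  have g: "inv_into X f (f y) = y" using assms by (simp add: inv_into_f_f)
  show ?thesis
  proof (cases "k = -1")
    case True
    then show ?thesis using g by (simp add: ziter_def)
  next
    case False
    then have n: "nat (- k) = Suc (nat (- (k+1)))" "\<not> (k + 1 \<ge> 0)" using F by auto
    have "(inv_into X f ^^ Suc (nat (- (k+1)))) (f y) = (inv_into X f ^^ (nat (- (k+1)))) (inv_into X f (f y))"
      by (simp only: funpow_Suc_right o_apply)
    then show ?thesis using F g n unfolding ziter_def by simp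
  qed
qed

lemma ziter_funpow:
  assumes "inj_on f X" "f ` X \<subseteq> X" "y \<in> X"
  shows "ziter X f k ((f ^^ m) y) = ziter X f (k + int m) y"
proof (induction m arbitrary: k)
  case 0 then show ?case by simp
next
  case (Suc m)
  have "ziter X f k ((f ^^ Suc m) y) = ziter X f k (f ((f ^^ m) y))" by simp
  also have "\<dots> = ziter X f (k + 1) ((f ^^ m) y)"
    using ziter_f[OF assms(1) funpow_in[OF assms(2,3)]] by blast
  also have "\<dots> = ziter X f (k + int (Suc m)) y" using Suc.IH by (simp add: add.assoc)
  finally show ?case .
qed

lemma per_sub_CR:
  assumes cont: "continuous_on X f" and fX: "f ` X \<subseteq> X" and xc: "x \<in> closure (Per X f)"
    and xX: "x \<in> X"
  shows "x \<in> CR X f"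
proof -
  have "\<exists>l>0. \<exists>xs::nat \<Rightarrow> 'a.
     (\<forall>i\<le>l. xs i \<in> X) \<and> xs 0 = x \<and> xs l = x \<and>
     (\<forall>i<l. dist (f (xs i)) (xs (i + 1)) < e)" if e: "e > 0" for e
  proof -
    obtain \<eta> where \<eta>: "\<eta> > 0" "\<forall>x'\<in>X. dist x' x < \<eta> \<longrightarrow> dist (f x') (f x) < e/2"
      using cont xX e unfolding continuous_on_iff by (meson half_gt_zero)
    obtain p where p: "p \<in> Per X f" "dist p x < min \<eta> (e/2)"
      using xc \<eta> e unfolding closure_approachable by (metis half_gt_zero min_less_iff_conj)
    obtain q where q: "q > 0" "(f ^^ q) p = p" "p \<in> X" using p(1) unfolding Per_def by blast
    define cs where "cs i = (if i = 0 \<or> i = q then x else (f ^^ i) p)" for i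
    have fpx: "dist (f p) (f x) < e/2" using \<eta> p q(3) by auto
    have "dist (f (cs i)) (cs (i + 1)) < e" if i: "i < q" for i
    proof (cases "i = 0")
      case True
      show ?thesis
      proof (cases "q = 1")
        case True
        then have fp: "f p = p" using q(2) by simp
        have "dist (f x) x \<le> dist (f x) (f p) + dist (f p) x" by (rule dist_triangle)
        also have "\<dots> < e/2 + e/2" using fpx p(2) fp by (simp add: dist_commute)
        finally show ?thesis using True \<open>i = 0\<close> by (simp add: cs_def)
      next
        case False
        have "dist (f p) (f x) < e" using fpx zero_le_dist[of "f p" "f x"] by linarith
        then show ?thesis using True i False by (simp add: cs_def dist_commute)
      qed
    next
      case False
      show ?thesis
      proof (cases "i + 1 = q")
        case True
        have fq: "f ((f ^^ i) p) = (f ^^ q) p" using True by auto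
        have "dist p x < e/2" using p(2) by simp
        moreover have "dist p x < e" using calculation zero_le_dist[of p x] by linarith
        ultimately show ?thesis using fq True False q(2) i by (simp add: cs_def)
      next
        case F2: False
        then show ?thesis using False i e by (simp add: cs_def)
      qed
    qed
    moreover have "\<forall>i\<le>q. cs i \<in> X" using xX funpow_in[OF fX q(3)] by (simp add: cs_def)
    ultimately show ?thesis using q(1) by (intro exI[of _ q] conjI) (auto simp: cs_def)
  qed
  then show ?thesis using xX unfolding CR_def by blast
qed

lemma CR_sub_per:
  assumes inj: "inj_on f X" and fX: "f ` X \<subseteq> X" and ex: "n_expansive X f n"
    and sh: "shadowing X f" and xCR: "x \<in> CR X f"
  shows "x \<in> closure (Per X f)"
  unfolding closure_approachable
proof (intro allI impI)
  fix \<epsilon> :: real assume "\<epsilon> > 0"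
  obtain c where c: "c > 0" "\<forall>x\<in>X. finite {y\<in>X. \<forall>k::int. dist (ziter X f k y) (ziter X f k x) \<le> c}"
    using ex unfolding n_expansive_def by blast
  define e' where "e' = min \<epsilon> (c/2)"
  have e': "e' > 0" using c \<open>\<epsilon> > 0\<close> by (simp add: e'_def)
  obtain d where d: "d > 0" "\<forall>xs::int \<Rightarrow> 'a.
     (\<forall>k. xs k \<in> X) \<and> (\<forall>k. dist (f (xs k)) (xs (k + 1)) < d) \<longrightarrow>
     (\<exists>y\<in>X. \<forall>k. dist (ziter X f k y) (xs k) < e')"
    using sh e' unfolding shadowing_def by blast
  have xX: "x \<in> X" and xC: "\<forall>e>0. \<exists>l>0. \<exists>xs::nat \<Rightarrow> 'a.
     (\<forall>i\<le>l. xs i \<in> X) \<and> xs 0 = x \<and> xs l = x \<and>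
     (\<forall>i<l. dist (f (xs i)) (xs (i + 1)) < e)" using xCR unfolding CR_def by simp_all
  obtain l :: nat and cs :: "nat \<Rightarrow> 'a" where lc: "l > 0" "\<forall>i\<le>l. cs i \<in> X" "cs 0 = x" "cs l = x"
     "\<forall>i<l. dist (f (cs i)) (cs (i + 1)) < d"
    using xC[rule_format, OF d(1)] by blast
  define xs where "xs k = cs (nat (k mod int l))" for k
  have lpos: "int l > 0" using lc(1) by simp
  have xsX: "\<forall>k. xs k \<in> X"
  proof
    fix k
    have "nat (k mod int l) \<le> l" using lpos by (simp add: nat_le_iff less_imp_le)
    then show "xs k \<in> X" using lc(2) by (simp add: xs_def)
  qed
  have xsd: "\<forall>k. dist (f (xs k)) (xs (k + 1)) < d"
  proof
    fix k
    define r where "r = k mod int l"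
    have r: "0 \<le> r" "r < int l" using lpos by (auto simp: r_def)
    have k1: "(k + 1) mod int l = (r + 1) mod int l" by (simp add: r_def mod_add_left_eq)
    show "dist (f (xs k)) (xs (k + 1)) < d"
    proof (cases "r + 1 < int l")
      case True
      then have "(k + 1) mod int l = r + 1" using k1 r by simp
      moreover have "nat (r + 1) = nat r + 1" using r by simp
      moreover have "nat r < l" using r by linarith
      ultimately show ?thesis using lc(5) by (simp add: xs_def r_def[symmetric])
    next
      case False
      then have "r + 1 = int l" using r by simp
      then have "(k + 1) mod int l = 0" using k1 by simp
      moreover have "nat r + 1 = l" using \<open>r + 1 = int l\<close> r by linarith
      moreover have "dist (f (cs (nat r))) (cs (nat r + 1)) < d"
        using lc(5) \<open>nat r + 1 = l\<close> by (metis less_add_one)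
      ultimately show ?thesis using lc(3,4) by (simp add: xs_def r_def[symmetric])
    qed
  qed
  from d(2)[rule_format, OF conjI[OF xsX xsd]]
  obtain y where y: "y \<in> X" "\<forall>k. dist (ziter X f k y) (xs k) < e'" by blast
  have per: "xs (k + int (j * l)) = xs k" for k j
    by (simp add: xs_def)
  define z where "z j = (f ^^ (j * l)) y" for j
  define S where "S = {w\<in>X. \<forall>k::int. dist (ziter X f k w) (ziter X f k y) \<le> c}"
  have zS: "range z \<subseteq> S"
  proof
    fix w assume "w \<in> range z"
    then obtain j where j: "w = z j" by blast
    have "dist (ziter X f k w) (ziter X f k y) \<le> c" for k
    proof -
      have "ziter X f k w = ziter X f (k + int (j*l)) y"
        using ziter_funpow[OF inj fX y(1)] by (simp add: j z_def)
      then have "dist (ziter X f k w) (xs k) < e'" using y(2)[rule_format, of "k + int (j*l)"] per[of k j] by simp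
      moreover have "dist (ziter X f k y) (xs k) < e'" using y(2) by blast
      ultimately have "dist (ziter X f k w) (ziter X f k y) < e' + e'"
        by (metis dist_commute dist_triangle_lt add_strict_mono)
      then show ?thesis unfolding e'_def by linarith
    qed
    moreover have "w \<in> X" using funpow_in[OF fX y(1)] by (simp add: j z_def)
    ultimately show "w \<in> S" by (simp add: S_def)
  qed
  have "finite S" using c(2) y(1) unfolding S_def by blast
  then have "finite (range z)" using zS finite_subset by blast
  then have "\<not> inj z" using finite_imageD infinite_UNIV_nat by blast
  then obtain i j where ij: "i \<noteq> j" "z i = z j" unfolding inj_def by blast
  have "\<exists>i j. i < j \<and> z i = z j"
    using ij by (metis linorder_neqE_nat)
  then obtain a b where ab: "a < b" "z a = z b" by blast
  have "b * l = a * l + (b - a) * l" using ab(1) by (simp add: diff_mult_distrib)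
  then have "(f ^^ (b*l)) y = (f ^^ (a*l)) ((f ^^ ((b-a)*l)) y)"
    by (simp add: funpow_add)
  then have "(f ^^ (a*l)) ((f ^^ ((b-a)*l)) y) = (f ^^ (a*l)) y"
    using ab(2) unfolding z_def by simp
  then have yp: "(f ^^ ((b-a)*l)) y = y"
    using funpow_inj[OF inj fX] funpow_in[OF fX y(1)] y(1) by blast
  have "(b - a) * l > 0" using ab(1) lc(1) by simp
  then have "y \<in> Per X f" using yp y(1) unfolding Per_def by blast
  moreover have "dist y x < \<epsilon>"
  proof -
    have "dist (ziter X f 0 y) (xs 0) < e'" using y(2) by blast
    then have "dist y x < e'" using lc(3) by (simp add: ziter_def xs_def)
    then show ?thesis unfolding e'_def by linarith
  qed
  ultimately show "\<exists>y\<in>Per X f. dist y x < \<epsilon>" by blast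
qed

theorem proposition2p3:
  fixes X :: "'a::metric_space set" and f :: "'a \<Rightarrow> 'a" and n :: nat
  assumes "compact X"
    and "\<exists>g. homeomorphism X X f g"
    and "n_expansive X f n"
    and "shadowing X f"
  shows "CR X f = closure (Per X f)"
proof -
  obtain g where h: "homeomorphism X X f g" using assms(2) by blast
  have inj: "inj_on f X" using h unfolding homeomorphism_def by (metis inj_on_inverseI)
  have fX: "f ` X \<subseteq> X" using h unfolding homeomorphism_def by blast
  have cont: "continuous_on X f" using h unfolding homeomorphism_def by blast
  have cl: "closure (Per X f) \<subseteq> X"
    using assms(1) compact_imp_closed closure_minimal[of "Per X f" X]
    unfolding Per_def by blast
  show ?thesis
  proof
    show "CR X f \<subseteq> closure (Per X f)" using CR_sub_per[OF inj fX assms(3,4)] by blast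
    show "closure (Per X f) \<subseteq> CR X f" using per_sub_CR[OF cont fX] cl by blast
  qed
qed

end
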